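(* Let $G\in\mathbb C[x,y]\setminus\mathbb C$ and $K\in\mathbb C[s,t]\setminus\mathbb C$ be irreducible polynomials of degree at most $\delta$, let $F\in\mathbb C[x,y,s,t]\setminus\{0\}$ be a polynomial of degree $d$, and let $P\subset Z(G)$ and $Q\subset Z(K)$ be finite sets. Then \[|Z(F)\cap(P\times Q)|=O_{d,\delta}(|P|+|Q|),\] unless $F$ is $(G,K)$-Cartesian.
   Context: $F$ is $(G,K)$-Cartesian if $F=G(x,y)H(x,y,s,t)+K(s,t)L(x,y,s,t)$ for some $H,L\in\mathbb C[x,y,s,t]$. $P\times Q$ is viewed in $\mathbb C^4$ with coordinates $(x,y,s,t)$. The implied constant depends only on $d$ and $\delta$. *)

theory Defs
  imports "HOL-Computational_Algebra.Polynomial" "HOL-Computational_Algebra.Polynomial_Factorial" Complex_Main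
begin

text \<open>C[x,y] is complex poly poly (outer variable x, inner y);
  C[s,t] is complex poly poly (outer s, inner t);
  C[x,y,s,t] is complex poly poly poly poly (outermost x, then y, then s, innermost t).\<close>

type_synonym poly2 = "complex poly poly"
type_synonym poly4 = "complex poly poly poly poly"

definition eval2 :: "poly2 \<Rightarrow> complex \<Rightarrow> complex \<Rightarrow> complex" where
  "eval2 p a b = poly (map_poly (\<lambda>c. poly c b) p) a"

definition eval4 :: "poly4 \<Rightarrow> complex \<Rightarrow> complex \<Rightarrow> complex \<Rightarrow> complex \<Rightarrow> complex" where
  "eval4 p x y s t =
     poly (map_poly (\<lambda>c. poly (map_poly (\<lambda>d. poly (map_poly (\<lambda>e. poly e t) d) s) c) y) p) x"

definition tdeg2 :: "'a::zero poly poly \<Rightarrow> nat" where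
  "tdeg2 p = Max ({i + degree (coeff p i) | i. coeff p i \<noteq> 0} \<union> {0})"

definition tdeg3 :: "'a::zero poly poly poly \<Rightarrow> nat" where
  "tdeg3 p = Max ({i + tdeg2 (coeff p i) | i. coeff p i \<noteq> 0} \<union> {0})"

definition tdeg4 :: "'a::zero poly poly poly poly \<Rightarrow> nat" where
  "tdeg4 p = Max ({i + tdeg3 (coeff p i) | i. coeff p i \<noteq> 0} \<union> {0})"

definition Z2 :: "poly2 \<Rightarrow> (complex \<times> complex) set" where
  "Z2 p = {(a, b). eval2 p a b = 0}"

definition Z4 :: "poly4 \<Rightarrow> ((complex \<times> complex) \<times> (complex \<times> complex)) set" where
  "Z4 p = {((x, y), (s, t)). eval4 p x y s t = 0}"

definition embed_xy :: "poly2 \<Rightarrow> poly4" where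
  "embed_xy G = map_poly (map_poly (\<lambda>a. [:[:a:]:])) G"

definition embed_st :: "poly2 \<Rightarrow> poly4" where
  "embed_st K = [:[:K:]:]"

definition cartesian :: "poly2 \<Rightarrow> poly2 \<Rightarrow> poly4 \<Rightarrow> bool" where
  "cartesian G K F \<longleftrightarrow> (\<exists>H L. F = embed_xy G * H + embed_st K * L)"

end

theory Submission imports Defs "HOL-Computational_Algebra.Field_as_Ring" "HOL-Computational_Algebra.Fundamental_Theorem_Algebra" Subresultants.Subresultant_Gcd begin

lemma evhom: assumes "comm_ring_hom h" shows "comm_ring_hom (\<lambda>p. poly (map_poly h p) a)"
proof -
  interpret h: comm_ring_hom h by (rule assms)
  interpret hh: map_poly_comm_ring_hom h ..
  show ?thesis by unfold_locales (auto simp: hh.hom_add hh.hom_mult)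
qed

lemma map_poly_const[simp]: "f 0 = 0 \<Longrightarrow> map_poly f [:c:] = [:f c:]"
  by (rule poly_eqI) (auto simp: coeff_map_poly coeff_pCons split: nat.splits)

lemma polyhom: "comm_ring_hom (\<lambda>p. poly p a)"
  by unfold_locales auto

definition "h2 s t = (\<lambda>d::complex poly poly. poly (map_poly (\<lambda>e. poly e t) d) s)"
definition "h3 y s t = (\<lambda>c::complex poly poly poly. poly (map_poly (h2 s t) c) y)"

lemma h2hom: "comm_ring_hom (h2 s t)" unfolding h2_def by (rule evhom[OF polyhom])
lemma h3hom: "comm_ring_hom (h3 y s t)" unfolding h3_def by (rule evhom[OF h2hom])
lemma eval4_alt: "eval4 p x y s t = poly (map_poly (h3 y s t) p) x"
  unfolding eval4_def h3_def h2_def ..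
lemma e4hom: "comm_ring_hom (\<lambda>p. eval4 p x y s t)"
proof -
  have "comm_ring_hom (\<lambda>p. poly (map_poly (h3 y s t) p) x)" by (rule evhom[OF h3hom])
  thus ?thesis unfolding eval4_alt .
qed
lemma e2hom: "comm_ring_hom (\<lambda>p. eval2 p s t)"
  unfolding eval2_def using h2hom unfolding h2_def .

lemma eval2_h2: "eval2 p s t = h2 s t p" unfolding eval2_def h2_def ..

lemma eval4_mult: "eval4 (p*q) x y s t = eval4 p x y s t * eval4 q x y s t"
proof - interpret comm_ring_hom "\<lambda>p. eval4 p x y s t" by (rule e4hom) show ?thesis by (rule hom_mult) qed
lemma eval4_add: "eval4 (p+q) x y s t = eval4 p x y s t + eval4 q x y s t"
proof - interpret comm_ring_hom "\<lambda>p. eval4 p x y s t" by (rule e4hom) show ?thesis by (rule hom_add) qed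
lemma eval4_diff: "eval4 (p-q) x y s t = eval4 p x y s t - eval4 q x y s t"
proof - interpret comm_ring_hom "\<lambda>p. eval4 p x y s t" by (rule e4hom) show ?thesis by (rule hom_minus) qed
lemma eval2_mult: "eval2 (p*q) s t = eval2 p s t * eval2 q s t"
proof - interpret comm_ring_hom "\<lambda>p. eval2 p s t" by (rule e2hom) show ?thesis by (rule hom_mult) qed
lemma eval2_0[simp]: "eval2 0 s t = 0" by (simp add: eval2_def)
lemma h2_0[simp]: "h2 s t 0 = 0" by (simp add: h2_def)
lemma h3_0[simp]: "h3 y s t 0 = 0" by (simp add: h3_def)

definition const4 :: "complex \<Rightarrow> poly4" where "const4 a = [:[:[:[:a:]:]:]:]"

lemma eval4_const4[simp]: "eval4 (const4 a) x y s t = a"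
  by (simp add: eval4_def const4_def)

lemma eval4_embed_st[simp]: "eval4 (embed_st c) x y s t = eval2 c s t"
  by (simp add: eval4_def embed_st_def eval2_def)

lemma eval4_embed_xy[simp]: "eval4 (embed_xy g) x y s t = eval2 g x y"
proof -
  have 1: "h3 y s t \<circ> map_poly (\<lambda>a. [:[:a:]:]) = (\<lambda>c. poly c y)"
    by (rule ext) (simp add: h3_def h2_def map_poly_map_poly o_def)
  show ?thesis unfolding eval4_alt embed_xy_def eval2_def
    by (simp add: map_poly_map_poly 1)
qed

lemma eval4_spec: "eval4 F x y s t = eval2 (map_poly (map_poly (\<lambda>c. eval2 c s t)) F) x y"
proof -
  have 1: "(\<lambda>c. poly c y) \<circ> map_poly (\<lambda>c. poly (map_poly (\<lambda>c. poly c t) c) s) = h3 y s t"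
    by (rule ext) (simp add: h3_def h2_def)
  show ?thesis unfolding eval4_alt eval2_def
    by (simp add: map_poly_map_poly 1)
qed


definition bd2 :: "nat \<Rightarrow> 'a::zero poly poly \<Rightarrow> bool" where
  "bd2 D p \<longleftrightarrow> degree p \<le> D \<and> (\<forall>i. degree (coeff p i) \<le> D)"

definition BB :: "nat \<Rightarrow> nat" where "BB D = (2*D*D + 2*D) * D"

lemma res_deg: fixes K H :: poly2
  assumes "bd2 D K" "bd2 D H"
  shows "degree (resultant K H) \<le> (degree K + degree H) * D"
proof -
  let ?A = "sylvester_mat K H"
  let ?n = "degree K + degree H"
  have ent: "degree (?A $$ (i,j)) \<le> D" if "i < ?n" "j < ?n" for i j
    using assms that unfolding bd2_def by (auto simp: sylvester_index_mat)
  have "degree (det ?A) \<le> ?n * D"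
    unfolding det_def
  proof (simp, rule degree_sum_le)
    show "finite {p. p permutes {0..<?n}}" by (rule finite_permutations) simp
  next
    fix p assume p: "p \<in> {p. p permutes {0..<?n}}"
    have "degree ((of_int (sign p) :: complex poly) * (\<Prod>i = 0..<?n. ?A $$ (i, p i)))
        \<le> degree (of_int (sign p) :: complex poly) + degree (\<Prod>i = 0..<?n. ?A $$ (i, p i))"
      by (rule degree_mult_le)
    also have "degree (of_int (sign p) :: complex poly) = 0" by simp
    also have "degree (\<Prod>i = 0..<?n. ?A $$ (i, p i)) \<le> (\<Sum>i = 0..<?n. degree (?A $$ (i, p i)))"
      using degree_prod_sum_le[of "{0..<?n}" "\<lambda>i. ?A $$ (i, p i)"] by (simp add: o_def)
    also have "\<dots> \<le> (\<Sum>i = 0..<?n. D)"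
    proof (rule sum_mono)
      fix i assume i: "i \<in> {0..<?n}"
      have "p i \<in> {0..<?n}" using p i by (auto simp: permutes_in_image)
      thus "degree (?A $$ (i, p i)) \<le> D" using i ent by auto
    qed
    finally show "degree ((of_int (sign p) :: complex poly) * (\<Prod>i = 0..<?n. ?A $$ (i, p i))) \<le> ?n * D"
      by simp
  qed
  thus ?thesis unfolding resultant_def .
qed

lemma irr_dvd: assumes "irreducible K" "c dvd K" "\<not> is_unit c" shows "K dvd c"
proof -
  obtain m where m: "K = c * m" using assms(2) by (auto elim: dvdE)
  hence "is_unit m" using irreducibleD[OF assms(1) m] assms(3) by auto
  then obtain u where u: "m * u = 1" by (auto simp: dvd_def) 
  have "c = K * u" using m u by (metis mult.assoc mult.right_neutral)
  thus ?thesis by auto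
qed

lemma lin_dvd: fixes K :: poly2 assumes "\<forall>i. poly (coeff K i) b = 0" shows "[:[:-b,1:]:] dvd K"
  using assms by (simp add: const_poly_dvd_iff poly_eq_0_iff_dvd)

lemma lin_not_unit: "\<not> is_unit ([:[:-b,1:]:] :: poly2)"
proof -
  have "\<not> is_unit ([:-b,1:] :: complex poly)" by (simp add: is_unit_iff_degree)
  thus ?thesis by (simp add: is_unit_const_poly_iff)
qed

lemma gcd_deg: fixes K H :: poly2 assumes "irreducible K" "\<not> K dvd H" shows "degree (gcd K H) = 0"
proof (cases "is_unit (gcd K H)")
  case True thus ?thesis by (auto simp: is_unit_poly_iff)
next
  case False
  have "K dvd gcd K H" by (rule irr_dvd[OF assms(1) gcd_dvd1 False])
  hence "K dvd H" using dvd_trans gcd_dvd2 by blast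
  thus ?thesis using assms by auto
qed

lemma bezout: fixes K H :: poly2
  assumes irr: "irreducible K" and nd: "\<not> K dvd H" and bK: "bd2 D K" and bH: "bd2 D H"
  shows "finite (Z2 K \<inter> Z2 H) \<and> card (Z2 K \<inter> Z2 H) \<le> BB D"
proof -
  have K0: "K \<noteq> 0" using irr by auto
  have H0: "H \<noteq> 0" using nd by auto
  define hb where "hb b = map_poly (\<lambda>c::complex poly. poly c b)" for b
  have hbc: "coeff (hb b p) i = poly (coeff p i) b" for b p i
    unfolding hb_def by (simp add: coeff_map_poly)
  have ev: "eval2 p a b = poly (hb b p) a" for p a b unfolding eval2_def hb_def ..
  define R where "R = resultant K H * lead_coeff K * lead_coeff H"
  have res0: "resultant K H \<noteq> 0" using resultant_0_gcd[of K H] gcd_deg[OF irr nd] by simp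
  have R0: "R \<noteq> 0" unfolding R_def using res0 K0 H0 by simp
  have dlK: "degree (lead_coeff K) \<le> D" and dlH: "degree (lead_coeff H) \<le> D"
    using bK bH unfolding bd2_def by auto
  have dKH: "degree K \<le> D" "degree H \<le> D" using bK bH unfolding bd2_def by auto
  have "degree R \<le> degree (resultant K H) + D + D" unfolding R_def
    using degree_mult_le[of "resultant K H * lead_coeff K" "lead_coeff H"]
      degree_mult_le[of "resultant K H" "lead_coeff K"] dlK dlH by linarith
  also have "degree (resultant K H) \<le> (D + D) * D"
    using res_deg[OF bK bH] dKH by (meson add_mono le_trans mult_le_mono1)
  finally have dR: "degree R \<le> 2*D*D + 2*D" by (simp add: algebra_simps)
  define Y where "Y = {b. poly R b = 0}"
  have finY: "finite Y" unfolding Y_def using R0 by (rule poly_roots_finite)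
  have cardY: "card Y \<le> 2*D*D + 2*D" unfolding Y_def using card_poly_roots_bound[OF R0] dR by linarith
  define fib where "fib b = {a. poly (hb b K) a = 0 \<and> poly (hb b H) a = 0}" for b
  have claim1: "b \<in> Y" if "(a,b) \<in> Z2 K \<inter> Z2 H" for a b
  proof (cases "poly (lead_coeff K) b = 0 \<or> poly (lead_coeff H) b = 0")
    case True thus ?thesis unfolding Y_def R_def by auto
  next
    case False
    have dk: "degree (hb b K) = degree K" unfolding hb_def
      by (rule degree_map_poly) (use False K0 in auto)
    have dh: "degree (hb b H) = degree H" unfolding hb_def
      by (rule degree_map_poly) (use False H0 in auto)
    have hk0: "hb b K \<noteq> 0" using False by (metis hbc leading_coeff_0_iff dk)
    have "resultant (hb b K) (hb b H) = poly (resultant K H) b"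
      unfolding hb_def by (rule comm_ring_hom.resultant_map_poly[OF polyhom]) (use dk dh hb_def in auto)
    moreover have "resultant (hb b K) (hb b H) = 0"
    proof -
      have "poly (hb b K) a = 0" "poly (hb b H) a = 0" using that unfolding Z2_def ev by auto
      hence "[:-a,1:] dvd hb b K" "[:-a,1:] dvd hb b H" by (auto simp: poly_eq_0_iff_dvd)
      hence "[:-a,1:] dvd gcd (hb b K) (hb b H)" by auto
      moreover have "gcd (hb b K) (hb b H) \<noteq> 0" using hk0 by auto
      ultimately have "degree [:-a,1:] \<le> degree (gcd (hb b K) (hb b H))" by (rule dvd_imp_degree_le)
      hence "degree (gcd (hb b K) (hb b H)) \<noteq> 0" by simp
      thus ?thesis using resultant_0_gcd by blast
    qed
    ultimately show ?thesis unfolding Y_def R_def by simp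
  qed
  have claim2: "finite (fib b) \<and> card (fib b) \<le> D" for b
  proof (cases "hb b K = 0")
    case False
    have "fib b \<subseteq> {a. poly (hb b K) a = 0}" unfolding fib_def by auto
    moreover have "finite {a. poly (hb b K) a = 0}" using False by (rule poly_roots_finite)
    moreover have "card {a. poly (hb b K) a = 0} \<le> D"
      using card_poly_roots_bound[OF False] degree_map_poly_le[of _ K] dKH unfolding hb_def
      by (meson le_trans)
    ultimately show ?thesis by (meson card_mono finite_subset le_trans)
  next
    case Kz: True
    show ?thesis
    proof (cases "hb b H = 0")
      case False
      have "fib b \<subseteq> {a. poly (hb b H) a = 0}" unfolding fib_def by auto
      moreover have "finite {a. poly (hb b H) a = 0}" using False by (rule poly_roots_finite)
      moreover have "card {a. poly (hb b H) a = 0} \<le> D"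
        using card_poly_roots_bound[OF False] degree_map_poly_le[of _ H] dKH unfolding hb_def
        by (meson le_trans)
      ultimately show ?thesis by (meson card_mono finite_subset le_trans)
    next
      case True
      have "[:[:-b,1:]:] dvd K" by (rule lin_dvd) (metis Kz hbc coeff_0)
      hence "K dvd [:[:-b,1:]:]" using irr_dvd[OF irr] lin_not_unit by blast
      moreover have "[:[:-b,1:]:] dvd H" by (rule lin_dvd) (metis True hbc coeff_0)
      ultimately have "K dvd H" by (rule dvd_trans)
      thus ?thesis using nd by auto
    qed
  qed
  have sub: "Z2 K \<inter> Z2 H \<subseteq> (\<Union>b\<in>Y. (\<lambda>a. (a,b)) ` fib b)"
  proof
    fix z assume z: "z \<in> Z2 K \<inter> Z2 H"
    obtain a b where ab: "z = (a,b)" by (cases z)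
    have "b \<in> Y" using claim1 z ab by auto
    moreover have "a \<in> fib b" using z ab unfolding fib_def Z2_def ev by auto
    ultimately show "z \<in> (\<Union>b\<in>Y. (\<lambda>a. (a,b)) ` fib b)" using ab by auto
  qed
  have finU: "finite (\<Union>b\<in>Y. (\<lambda>a. (a,b)) ` fib b)" using finY claim2 by auto
  have "card (\<Union>b\<in>Y. (\<lambda>a. (a,b)) ` fib b) \<le> (\<Sum>b\<in>Y. card ((\<lambda>a. (a,b)) ` fib b))"
    by (rule card_UN_le[OF finY])
  also have "\<dots> \<le> (\<Sum>b\<in>Y. D)"
    by (rule sum_mono) (meson card_image_le claim2 le_trans)
  also have "\<dots> = card Y * D" by simp
  also have "\<dots> \<le> BB D" unfolding BB_def using cardY by simp
  finally show ?thesis using sub finU by (meson card_mono finite_subset le_trans)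
qed


lemma bd2_mono: "bd2 D p \<Longrightarrow> D \<le> D' \<Longrightarrow> bd2 D' p"
  unfolding bd2_def by (meson le_trans)

lemma bd2_exists: "\<exists>D. bd2 D (p :: 'a::zero poly poly)"
proof -
  define D where "D = degree p + (\<Sum>i\<le>degree p. degree (coeff p i))"
  have "degree (coeff p i) \<le> D" for i
  proof (cases "i \<le> degree p")
    case True
    hence "degree (coeff p i) \<le> (\<Sum>i\<le>degree p. degree (coeff p i))"
      by (intro member_le_sum) auto
    thus ?thesis unfolding D_def by simp
  next
    case False thus ?thesis by (simp add: coeff_eq_0)
  qed
  hence "bd2 D p" unfolding bd2_def D_def by auto
  thus ?thesis by blast
qed

lemma Z2_inf: fixes K :: poly2 assumes irr: "irreducible K" shows "infinite (Z2 K)"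
proof (cases "degree K = 0")
  case True
  define k where "k = coeff K 0"
  have Kk: "K = [:k:]" unfolding k_def using True by (metis degree_0_id)
  have "\<not> is_unit k" using irr Kk by (auto simp: is_unit_const_poly_iff)
  moreover have "k \<noteq> 0" using irr Kk by auto
  ultimately have "degree k \<noteq> 0" by (simp add: is_unit_iff_degree)
  hence "\<not> constant (poly k)" by (simp add: constant_degree)
  then obtain b where b: "poly k b = 0"
    using fundamental_theorem_of_algebra by blast
  have "UNIV \<times> {b} \<subseteq> Z2 K" unfolding Z2_def eval2_def Kk using b by auto
  moreover have "infinite (UNIV \<times> {b} :: (complex \<times> complex) set)"
  proof
    assume "finite (UNIV \<times> {b} :: (complex \<times> complex) set)"
    hence "finite (fst ` (UNIV \<times> {b} :: (complex \<times> complex) set))" by (rule finite_imageI)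
    moreover have "fst ` (UNIV \<times> {b} :: (complex \<times> complex) set) = UNIV" by force
    ultimately show False by (simp add: infinite_UNIV_char_0)
  qed
  ultimately show ?thesis using finite_subset by blast
next
  case False
  have K0: "K \<noteq> 0" using irr by auto
  define lc where "lc = lead_coeff K"
  have lc0: "lc \<noteq> 0" using K0 unfolding lc_def by simp
  have "infinite {b. poly lc b \<noteq> 0}"
  proof
    assume "finite {b. poly lc b \<noteq> 0}"
    moreover have "finite {b. poly lc b = 0}" using lc0 by (rule poly_roots_finite)
    ultimately have "finite ({b. poly lc b \<noteq> 0} \<union> {b. poly lc b = 0})" by auto
    moreover have "{b. poly lc b \<noteq> 0} \<union> {b. poly lc b = 0} = (UNIV :: complex set)" by auto
    ultimately show False by (simp add: infinite_UNIV_char_0)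
  qed
  moreover have "{b. poly lc b \<noteq> 0} \<subseteq> snd ` Z2 K"
  proof
    fix b assume b: "b \<in> {b. poly lc b \<noteq> 0}"
    have d: "degree (map_poly (\<lambda>c. poly c b) K) = degree K"
      by (rule degree_map_poly) (use b K0 lc_def in auto)
    then obtain a where "poly (map_poly (\<lambda>c. poly c b) K) a = 0"
      using fundamental_theorem_of_algebra constant_degree False by metis
    hence "(a,b) \<in> Z2 K" unfolding Z2_def eval2_def by auto
    thus "b \<in> snd ` Z2 K" by force
  qed
  ultimately show ?thesis using finite_subset by blast
qed

lemma study: fixes K c :: poly2 assumes irr: "irreducible K"
  and van: "\<And>a b. (a,b) \<in> Z2 K \<Longrightarrow> eval2 c a b = 0" shows "K dvd c"
proof (rule ccontr)
  assume nd: "\<not> K dvd c"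
  obtain D1 where D1: "bd2 D1 K" using bd2_exists by blast
  obtain D2 where D2: "bd2 D2 c" using bd2_exists by blast
  have "finite (Z2 K \<inter> Z2 c)"
    using bezout[OF irr nd bd2_mono[OF D1, of "max D1 D2"] bd2_mono[OF D2, of "max D1 D2"]] by auto
  moreover have "Z2 K \<inter> Z2 c = Z2 K" using van unfolding Z2_def by auto
  ultimately show False using Z2_inf[OF irr] by simp
qed


lemma const4_mult: "const4 a * const4 b = const4 (a*b)" by (simp add: const4_def)
lemma const4_1: "const4 1 = 1" by (simp add: const4_def)

lemma embed_xy_mult: "embed_xy (p * q) = embed_xy p * embed_xy q"
proof -
  interpret phi: comm_ring_hom "\<lambda>a::complex. [:[:a:]:]" by unfold_locales auto
  interpret m1: map_poly_comm_ring_hom "\<lambda>a::complex. [:[:a:]:]" ..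
  interpret m2: map_poly_comm_ring_hom "map_poly (\<lambda>a::complex. [:[:a:]:])" ..
  show ?thesis unfolding embed_xy_def by (rule m2.hom_mult)
qed

definition bad :: "poly2 \<Rightarrow> poly4 \<Rightarrow> (nat \<times> nat) set" where
  "bad K F = {(i,j). \<not> K dvd coeff (coeff F i) j}"

lemma bad_fin: "finite (bad K F)"
proof -
  have "bad K F \<subseteq> (SIGMA i:{..degree F}. {..degree (coeff F i)})"
  proof
    fix z assume z: "z \<in> bad K F"
    obtain i j where ij: "z = (i,j)" by (cases z)
    have "coeff (coeff F i) j \<noteq> 0" using z ij unfolding bad_def by auto
    hence "coeff F i \<noteq> 0" "j \<le> degree (coeff F i)" by (auto intro: le_degree)
    hence "i \<le> degree F" by (auto intro: le_degree)
    thus "z \<in> (SIGMA i:{..degree F}. {..degree (coeff F i)})" using ij \<open>j \<le> _\<close> by auto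
  qed
  moreover have "finite (SIGMA i:{..degree F}. {..degree (coeff F i)})" by auto
  ultimately show ?thesis by (rule finite_subset)
qed

lemma cart_base: assumes "bad K F = {}" shows "\<exists>L. F = embed_st K * L"
proof -
  define L where "L = map_poly (map_poly (\<lambda>c. c div K)) F"
  have "F = embed_st K * L"
  proof (rule poly_eqI)
    fix i
    show "coeff F i = coeff (embed_st K * L) i"
    proof (rule poly_eqI)
      fix j
      have "K dvd coeff (coeff F i) j" using assms unfolding bad_def by auto
      thus "coeff (coeff F i) j = coeff (coeff (embed_st K * L) i) j"
        by (simp add: embed_st_def L_def coeff_map_poly)
    qed
  qed
  thus ?thesis by blast
qed

lemma cart: fixes G K :: poly2 and F :: poly4
  assumes irrG: "irreducible G" and irrK: "irreducible K"
  and van: "\<And>a b s t. (a,b) \<in> Z2 G \<Longrightarrow> (s,t) \<in> Z2 K \<Longrightarrow> eval4 F a b s t = 0"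
  shows "cartesian G K F"
proof -
  have "\<forall>F. card (bad K F) = n \<longrightarrow> (\<forall>a b s t. (a,b) \<in> Z2 G \<longrightarrow> (s,t) \<in> Z2 K \<longrightarrow> eval4 F a b s t = 0)
     \<longrightarrow> cartesian G K F" for n
  proof (induction n rule: less_induct)
    case (less n)
    show ?case
    proof (intro allI impI)
      fix F assume n: "card (bad K F) = n"
        and vF: "\<forall>a b s t. (a,b) \<in> Z2 G \<longrightarrow> (s,t) \<in> Z2 K \<longrightarrow> eval4 F a b s t = 0"
      show "cartesian G K F"
      proof (cases "bad K F = {}")
        case True
        then obtain L where "F = embed_st K * L" using cart_base by blast
        hence "F = embed_xy G * 0 + embed_st K * L" by simp
        thus ?thesis unfolding cartesian_def by blast
      next
        case False
        then obtain i0 j0 where ij0: "(i0,j0) \<in> bad K F" by auto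
        define c0 where "c0 = coeff (coeff F i0) j0"
        have nd: "\<not> K dvd c0" using ij0 unfolding bad_def c0_def by auto
        obtain s0 t0 where st0: "(s0,t0) \<in> Z2 K" and al: "eval2 c0 s0 t0 \<noteq> 0"
          using study[OF irrK, of c0] nd by blast
        define \<alpha> where "\<alpha> = eval2 c0 s0 t0"
        define g where "g = map_poly (map_poly (\<lambda>c. eval2 c s0 t0)) F"
        have "G dvd g"
        proof (rule study[OF irrG])
          fix a b assume "(a,b) \<in> Z2 G"
          thus "eval2 g a b = 0" unfolding g_def using eval4_spec[of F a b s0 t0] vF st0 by auto
        qed
        then obtain h where gh: "g = G * h" by (auto elim: dvdE)
        define F' where "F' = const4 \<alpha> * F - embed_xy g * embed_st c0"
        have K0: "eval2 K s0 t0 = 0" using st0 unfolding Z2_def by auto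
        have vF': "\<forall>a b s t. (a,b) \<in> Z2 G \<longrightarrow> (s,t) \<in> Z2 K \<longrightarrow> eval4 F' a b s t = 0"
        proof (intro allI impI)
          fix a b s t assume ab: "(a,b) \<in> Z2 G" and st: "(s,t) \<in> Z2 K"
          have "eval2 g a b = 0" unfolding gh eval2_mult using ab unfolding Z2_def by auto
          thus "eval4 F' a b s t = 0" unfolding F'_def eval4_diff eval4_mult
            using vF ab st by simp
        qed
        have ccF': "coeff (coeff F' i) j = [:[:\<alpha>:]:] * coeff (coeff F i) j
            - c0 * [:[:eval2 (coeff (coeff F i) j) s0 t0:]:]" for i j
          by (simp add: F'_def const4_def embed_xy_def embed_st_def g_def coeff_map_poly)
        have sub: "bad K F' \<subseteq> bad K F - {(i0,j0)}"
        proof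
          fix z assume z: "z \<in> bad K F'"
          obtain i j where ij: "z = (i,j)" by (cases z)
          show "z \<in> bad K F - {(i0,j0)}"
          proof (rule ccontr)
            assume "z \<notin> bad K F - {(i0,j0)}"
            hence "z \<notin> bad K F \<or> z \<in> {(i0,j0)}" by auto
            hence "K dvd coeff (coeff F' i) j"
            proof
              assume "z \<notin> bad K F"
              hence d: "K dvd coeff (coeff F i) j" using ij unfolding bad_def by auto
              then obtain m where "coeff (coeff F i) j = K * m" by (auto elim: dvdE)
              hence "eval2 (coeff (coeff F i) j) s0 t0 = 0" using K0 eval2_mult by simp
              hence "coeff (coeff F' i) j = [:[:\<alpha>:]:] * coeff (coeff F i) j" unfolding ccF' by simp
              thus "K dvd coeff (coeff F' i) j" using d by (metis dvd_mult)
            next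
              assume "z \<in> {(i0,j0)}"
              hence "i = i0" "j = j0" using ij by auto
              thus ?thesis unfolding ccF' by (simp add: c0_def[symmetric] \<alpha>_def[symmetric] mult.commute)
            qed
            thus False using z ij unfolding bad_def by auto
          qed
        qed
        have "card (bad K F') < n"
        proof -
          have "card (bad K F') \<le> card (bad K F - {(i0,j0)})"
            using sub bad_fin by (intro card_mono) auto
          also have "\<dots> < card (bad K F)" using ij0 bad_fin[of K F]
            by (meson card_Diff1_less)
          finally show ?thesis using n by simp
        qed
        with less.IH vF' obtain H' L' where HL: "F' = embed_xy G * H' + embed_st K * L'"
          unfolding cartesian_def by blast
        have eq: "const4 \<alpha> * F = embed_xy G * (H' + embed_xy h * embed_st c0) + embed_st K * L'"
          using HL unfolding F'_def gh embed_xy_mult by (simp add: algebra_simps)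
        have "F = const4 (1/\<alpha>) * (const4 \<alpha> * F)"
          using al unfolding \<alpha>_def[symmetric] by (simp add: mult.assoc[symmetric] const4_mult const4_1)
        also have "\<dots> = embed_xy G * (const4 (1/\<alpha>) * (H' + embed_xy h * embed_st c0))
                     + embed_st K * (const4 (1/\<alpha>) * L')"
          unfolding eq by (simp add: algebra_simps)
        finally show ?thesis unfolding cartesian_def by blast
      qed
    qed
  qed
  thus ?thesis using van by blast
qed


lemma max_ge: fixes p :: "'a::zero poly"
  assumes "coeff p i \<noteq> 0"
  shows "i + f (coeff p i) \<le> Max ({i + f (coeff p i) | i. coeff p i \<noteq> 0} \<union> {0})"
proof -
  have "{i + f (coeff p i) | i. coeff p i \<noteq> 0} = (\<lambda>i. i + f (coeff p i)) ` {i. coeff p i \<noteq> 0}" by auto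
  moreover have "finite {i. coeff p i \<noteq> 0}"
    by (rule finite_subset[of _ "{..degree p}"]) (auto intro: le_degree)
  ultimately have "finite ({i + f (coeff p i) | i. coeff p i \<noteq> 0} \<union> {0})" by simp
  thus ?thesis by (rule Max_ge) (use assms in auto)
qed

lemma deg_le_max: fixes p :: "'a::zero poly"
  shows "degree p \<le> Max ({i + f (coeff p i) | i. coeff p i \<noteq> 0} \<union> {0})"
proof (cases "p = 0")
  case True thus ?thesis by simp
next
  case False
  hence "coeff p (degree p) \<noteq> 0" by simp
  from max_ge[OF this, of f] show ?thesis by simp
qed

lemma tdeg2_bd: "bd2 (tdeg2 p) p"
  unfolding bd2_def
proof (intro conjI allI)
  show "degree p \<le> tdeg2 p" unfolding tdeg2_def by (rule deg_le_max)
  fix i show "degree (coeff p i) \<le> tdeg2 p"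
  proof (cases "coeff p i = 0")
    case False
    from max_ge[OF False, of degree] show ?thesis unfolding tdeg2_def by simp
  qed simp
qed

definition bd4 :: "nat \<Rightarrow> poly4 \<Rightarrow> bool" where
  "bd4 D F \<longleftrightarrow> degree F \<le> D \<and> (\<forall>i. degree (coeff F i) \<le> D) \<and> (\<forall>i j. bd2 D (coeff (coeff F i) j))"

lemma bd2_zero: "bd2 D 0" unfolding bd2_def by simp

lemma tdeg4_bd: "bd4 (tdeg4 F) F"
  unfolding bd4_def
proof (intro conjI allI)
  show "degree F \<le> tdeg4 F" unfolding tdeg4_def by (rule deg_le_max)
  fix i
  have t3: "tdeg3 (coeff F i) \<le> tdeg4 F"
  proof (cases "coeff F i = 0")
    case False
    from max_ge[OF False, of tdeg3] show ?thesis unfolding tdeg4_def by simp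
  qed (simp add: tdeg3_def)
  show "degree (coeff F i) \<le> tdeg4 F"
    using t3 deg_le_max[of "coeff F i" tdeg2] unfolding tdeg3_def by linarith
  fix j
  show "bd2 (tdeg4 F) (coeff (coeff F i) j)"
  proof (cases "coeff (coeff F i) j = 0")
    case True thus ?thesis by (simp add: bd2_zero)
  next
    case False
    from max_ge[OF False, of tdeg2] have "tdeg2 (coeff (coeff F i) j) \<le> tdeg3 (coeff F i)"
      unfolding tdeg3_def by simp
    thus ?thesis using t3 tdeg2_bd bd2_mono by (meson le_trans)
  qed
qed

lemma bd4_mono: "bd4 D F \<Longrightarrow> D \<le> D' \<Longrightarrow> bd4 D' F"
  unfolding bd4_def using bd2_mono by (meson le_trans)

lemma bd2_add: "bd2 D p \<Longrightarrow> bd2 D q \<Longrightarrow> bd2 D (p + q)"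
  unfolding bd2_def by (auto simp: degree_add_le)

lemma bd2_sum: "(\<And>i. i \<in> A \<Longrightarrow> bd2 D (f i)) \<Longrightarrow> bd2 D (\<Sum>i\<in>A. f i)"
  by (induction A rule: infinite_finite_induct) (auto simp: bd2_zero bd2_add)

lemma bd2_smult: fixes p :: poly2 shows "bd2 D p \<Longrightarrow> bd2 D (Polynomial.smult [:\<beta>:] p)"
  unfolding bd2_def by (auto simp: degree_smult_le order_trans)
lemma bd2_cmult: fixes p :: poly2 shows "bd2 D p \<Longrightarrow> bd2 D (p * [:[:\<beta>:]:])"
  using bd2_smult by simp

definition spec_xy :: "poly4 \<Rightarrow> complex \<Rightarrow> complex \<Rightarrow> poly2" where
  "spec_xy F a b = poly (map_poly (\<lambda>c. poly c [:[:b:]:]) F) [:[:a:]:]"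

lemma eval2_spec_xy: "eval2 (spec_xy F a b) s t = eval4 F a b s t"
proof -
  interpret E: comm_ring_hom "h2 s t" by (rule h2hom)
  have E1: "h2 s t [:[:a:]:] = a" for a by (simp add: h2_def)
  have E2: "h2 s t \<circ> (\<lambda>c. poly c [:[:b:]:]) = h3 b s t"
  proof
    fix c
    have "h2 s t (poly c [:[:b:]:]) = poly (map_poly (h2 s t) c) (h2 s t [:[:b:]:])"
      by (rule E.poly_map_poly[symmetric])
    thus "(h2 s t \<circ> (\<lambda>c. poly c [:[:b:]:])) c = h3 b s t c" by (simp add: h3_def E1)
  qed
  have "eval2 (spec_xy F a b) s t = h2 s t (poly (map_poly (\<lambda>c. poly c [:[:b:]:]) F) [:[:a:]:])"
    unfolding eval2_h2 spec_xy_def ..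
  also have "\<dots> = poly (map_poly (h2 s t) (map_poly (\<lambda>c. poly c [:[:b:]:]) F)) (h2 s t [:[:a:]:])"
    by (rule E.poly_map_poly[symmetric])
  also have "\<dots> = poly (map_poly (h3 b s t) F) a" by (simp add: map_poly_map_poly E1 E2)
  finally show ?thesis unfolding eval4_alt .
qed

lemma bd2_spec_xy: assumes "bd4 D F" shows "bd2 D (spec_xy F a b)"
proof -
  have inner: "bd2 D (poly (coeff F i) [:[:b:]:])" for i
  proof -
    have "poly (coeff F i) [:[:b:]:] = (\<Sum>j\<le>degree (coeff F i). coeff (coeff F i) j * [:[:b:]:] ^ j)"
      by (simp add: poly_altdef)
    also have "\<dots> = (\<Sum>j\<le>degree (coeff F i). coeff (coeff F i) j * [:[:b ^ j:]:])"
      by (simp add: poly_const_pow)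
    finally show ?thesis using assms unfolding bd4_def
      by (auto intro!: bd2_sum bd2_cmult bd2_smult)
  qed
  have "spec_xy F a b = (\<Sum>i\<le>degree (map_poly (\<lambda>c. poly c [:[:b:]:]) F).
      coeff (map_poly (\<lambda>c. poly c [:[:b:]:]) F) i * [:[:a:]:] ^ i)"
    unfolding spec_xy_def by (simp add: poly_altdef)
  also have "\<dots> = (\<Sum>i\<le>degree (map_poly (\<lambda>c. poly c [:[:b:]:]) F).
      poly (coeff F i) [:[:b:]:] * [:[:a ^ i:]:])"
    by (simp add: poly_const_pow coeff_map_poly)
  finally show ?thesis using inner by (auto intro!: bd2_sum bd2_cmult bd2_smult)
qed

lemma bd2_spec_st: assumes "bd4 D F" shows "bd2 D (map_poly (map_poly (\<lambda>c. eval2 c s t)) F)"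
  using assms unfolding bd2_def bd4_def
  by (auto simp: coeff_map_poly intro: order_trans[OF degree_map_poly_le])


theorem lemma3p1:
  "\<forall>d \<delta> :: nat. \<exists>C :: real. \<forall>(G :: poly2) (K :: poly2) (F :: poly4) P Q.
     irreducible G \<and> tdeg2 G \<ge> 1 \<and> tdeg2 G \<le> \<delta> \<and>
     irreducible K \<and> tdeg2 K \<ge> 1 \<and> tdeg2 K \<le> \<delta> \<and>
     F \<noteq> 0 \<and> tdeg4 F = d \<and>
     finite P \<and> finite Q \<and> P \<subseteq> Z2 G \<and> Q \<subseteq> Z2 K \<and>
     \<not> cartesian G K F
     \<longrightarrow> real (card (Z4 F \<inter> (P \<times> Q))) \<le> C * (real (card P) + real (card Q))"
proof (intro allI)
  fix d \<delta> :: nat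
  define D where "D = max d \<delta>"
  show "\<exists>C :: real. \<forall>(G :: poly2) (K :: poly2) (F :: poly4) P Q.
     irreducible G \<and> tdeg2 G \<ge> 1 \<and> tdeg2 G \<le> \<delta> \<and>
     irreducible K \<and> tdeg2 K \<ge> 1 \<and> tdeg2 K \<le> \<delta> \<and>
     F \<noteq> 0 \<and> tdeg4 F = d \<and>
     finite P \<and> finite Q \<and> P \<subseteq> Z2 G \<and> Q \<subseteq> Z2 K \<and>
     \<not> cartesian G K F
     \<longrightarrow> real (card (Z4 F \<inter> (P \<times> Q))) \<le> C * (real (card P) + real (card Q))"
  proof (rule exI[of _ "real (BB D)"], intro allI impI)
    fix G K :: poly2 and F :: poly4 and P Q
    assume A: "irreducible G \<and> tdeg2 G \<ge> 1 \<and> tdeg2 G \<le> \<delta> \<and>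
     irreducible K \<and> tdeg2 K \<ge> 1 \<and> tdeg2 K \<le> \<delta> \<and>
     F \<noteq> 0 \<and> tdeg4 F = d \<and>
     finite P \<and> finite Q \<and> P \<subseteq> Z2 G \<and> Q \<subseteq> Z2 K \<and>
     \<not> cartesian G K F"
    hence irrG: "irreducible G" and irrK: "irreducible K" and finP: "finite P" and finQ: "finite Q"
      and PG: "P \<subseteq> Z2 G" and QK: "Q \<subseteq> Z2 K" and nc: "\<not> cartesian G K F"
      and dG: "tdeg2 G \<le> \<delta>" and dK: "tdeg2 K \<le> \<delta>" and dF: "tdeg4 F = d" by auto
    have bG: "bd2 D G" using bd2_mono[OF tdeg2_bd[of G]] dG unfolding D_def by auto
    have bK: "bd2 D K" using bd2_mono[OF tdeg2_bd[of K]] dK unfolding D_def by auto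
    have bF: "bd4 D F" using bd4_mono[OF tdeg4_bd[of F]] dF unfolding D_def by auto
    obtain a0 b0 s0 t0 where ab0: "(a0,b0) \<in> Z2 G" and st0: "(s0,t0) \<in> Z2 K"
      and nz: "eval4 F a0 b0 s0 t0 \<noteq> 0"
      using cart[OF irrG irrK] nc by blast
    define g0 where "g0 = map_poly (map_poly (\<lambda>c. eval2 c s0 t0)) F"
    have g0ev: "eval2 g0 a b = eval4 F a b s0 t0" for a b unfolding g0_def using eval4_spec by simp
    have ndg: "\<not> G dvd g0"
    proof
      assume "G dvd g0"
      then obtain m where "g0 = G * m" by (auto elim: dvdE)
      hence "eval2 g0 a0 b0 = 0" using ab0 eval2_mult unfolding Z2_def by auto
      thus False using nz g0ev by simp
    qed
    define B0 where "B0 = Z2 G \<inter> Z2 g0"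
    have B0: "finite B0 \<and> card B0 \<le> BB D" unfolding B0_def
      by (rule bezout[OF irrG ndg bG]) (unfold g0_def, rule bd2_spec_st[OF bF])
    define Qp where "Qp p = {q\<in>Q. eval4 F (fst p) (snd p) (fst q) (snd q) = 0}" for p
    have eqS: "Z4 F \<inter> (P \<times> Q) = Sigma P Qp" 
    proof (rule Set.set_eqI)
      fix z :: "(complex \<times> complex) \<times> (complex \<times> complex)"
      obtain a b s t where z: "z = ((a,b),(s,t))" by (metis prod.exhaust)
      show "z \<in> Z4 F \<inter> (P \<times> Q) \<longleftrightarrow> z \<in> Sigma P Qp"
        unfolding z Z4_def Qp_def by (simp; blast)
    qed
    have finQp: "finite (Qp p)" for p unfolding Qp_def using finQ by auto
    have bound: "card (Qp p) \<le> BB D + (if p \<in> B0 then card Q else 0)" if pP: "p \<in> P" for p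
    proof -
      obtain a b where p: "p = (a,b)" by (cases p)
      define Fp where "Fp = spec_xy F a b"
      show ?thesis
      proof (cases "K dvd Fp")
        case True
        then obtain m where "Fp = K * m" by (auto elim: dvdE)
        hence "eval2 Fp s0 t0 = 0" using st0 eval2_mult unfolding Z2_def by auto
        hence "eval2 g0 a b = 0" unfolding g0ev Fp_def eval2_spec_xy by simp
        hence "p \<in> B0" unfolding B0_def using PG pP p unfolding Z2_def by auto
        moreover have "card (Qp p) \<le> card Q" unfolding Qp_def using finQ by (intro card_mono) auto
        ultimately show ?thesis by simp
      next
        case False
        have "Qp p \<subseteq> Z2 K \<inter> Z2 Fp"
          unfolding Qp_def Fp_def Z2_def using QK eval2_spec_xy p unfolding Z2_def by auto
        moreover have "finite (Z2 K \<inter> Z2 Fp) \<and> card (Z2 K \<inter> Z2 Fp) \<le> BB D"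
          by (rule bezout[OF irrK False bK]) (unfold Fp_def, rule bd2_spec_xy[OF bF])
        ultimately have "card (Qp p) \<le> BB D" by (meson card_mono le_trans)
        thus ?thesis by simp
      qed
    qed
    have cB: "card {p\<in>P. p \<in> B0} \<le> BB D"
    proof -
      have "card {p\<in>P. p \<in> B0} \<le> card B0" using B0 by (intro card_mono) auto
      thus ?thesis using B0 by linarith
    qed
    have S1: "card (Z4 F \<inter> (P \<times> Q)) = (\<Sum>p\<in>P. card (Qp p))"
      unfolding eqS using finP finQp by (simp add: card_SigmaI)
    have S2: "(\<Sum>p\<in>P. card (Qp p)) \<le> (\<Sum>p\<in>P. BB D + (if p \<in> B0 then card Q else 0))"
      by (rule sum_mono) (rule bound)
    have S3: "(\<Sum>p\<in>P. BB D + (if p \<in> B0 then card Q else 0))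
       = (\<Sum>p\<in>P. BB D) + (\<Sum>p\<in>P. (if p \<in> B0 then card Q else 0))"
      by (rule sum.distrib)
    have S4: "(\<Sum>p\<in>P. (if p \<in> B0 then card Q else 0)) = (\<Sum>p\<in>{p\<in>P. p \<in> B0}. card Q)"
      using finP by (rule sum.inter_filter[symmetric])
    have S5: "(\<Sum>p\<in>{p\<in>P. p \<in> B0}. card Q) = card {p\<in>P. p \<in> B0} * card Q" by simp
    have S6: "(\<Sum>p\<in>P. BB D) = card P * BB D" by simp
    have S7: "card {p\<in>P. p \<in> B0} * card Q \<le> BB D * card Q" using cB by (rule mult_right_mono) simp
    have N: "card (Z4 F \<inter> (P \<times> Q)) \<le> BB D * (card P + card Q)"
    proof -
      have "card (Z4 F \<inter> (P \<times> Q)) \<le> card P * BB D + BB D * card Q"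
        using S1 S2 S3 S4 S5 S6 S7 by linarith
      also have "\<dots> = BB D * (card P + card Q)" by (simp add: algebra_simps)
      finally show ?thesis .
    qed
    hence "real (card (Z4 F \<inter> (P \<times> Q))) \<le> real (BB D * (card P + card Q))"
      by (rule of_nat_mono)
    thus "real (card (Z4 F \<inter> (P \<times> Q))) \<le> real (BB D) * (real (card P) + real (card Q))"
      by simp
  qed
qed

end
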